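(* Every functional $\Lambda$-system algebra over a set $\mathcal{X}$ that has unique fixed points and whose function $\Gamma$ permits reordering is composition-order invariant.
   Context: Let $\Lambda,\mathcal{X}$ be sets. For finite disjoint $\mathcal{I},\mathcal{O}\subseteq\Lambda$ let $\mathfrak{S}_{\mathcal{I},\mathcal{O}}$ be a set of functions $s:\mathcal{X}^{\mathcal{I}}\to\mathcal{X}^{\mathcal{O}}$ ($\mathcal{X}^{\mathcal{I}}$ = functions $\mathcal{I}\to\mathcal{X}$) and $\mathfrak{S}$ their union. For $s\in\mathfrak{S}_{\mathcal{I},\mathcal{O}}$, $i\in\mathcal{I}$, $o\in\mathcal{O}$, $\mathbf{x}\in\mathcal{X}^{\mathcal{I}\setminus\{i\}}$ let $\mathrm{Fix}(s,i,o,\mathbf{x}):=\{x_i\in\mathcal{X}\mid s(\mathbf{x}\cup\{(i,x_i)\})(o)=x_i\}$. Let $\Gamma$ assign to each $s\in\mathfrak{S}_{\mathcal{I},\mathcal{O}}$ a set of unordered pairs $\{i,o\}$, $i\in\mathcal{I}$, $o\in\mathcal{O}$, with $\mathrm{Fix}(s,i,o,\mathbf{x})\neq\emptyset$ for all $\mathbf{x}$, and let $\phi^s_{i,o}:\mathcal{X}^{\mathcal{I}\setminus\{i\}}\to\mathcal{X}$ satisfy $\phi^s_{i,o}(\mathbf{x})\in\mathrm{Fix}(s,i,o,\mathbf{x})$. Define $\lambda(s)=\mathcal{I}\cup\mathcal{O}$; $s_1\parallel s_2$ (for $s_j\in\mathfrak{S}_{\mathcal{I}_j,\mathcal{O}_j}$,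 all four index sets pairwise disjoint) by $(s_1\parallel s_2)(\mathbf{x})(o_j)=s_j(\mathbf{x}|_{\mathcal{I}_j})(o_j)$; and $\gamma_{i,o}(s)(\mathbf{x})=s(\mathbf{x}\cup\{(i,\phi^s_{i,o}(\mathbf{x}))\})|_{\mathcal{O}\setminus\{o\}}$ for $\{i,o\}\in\Gamma(s)$. If $\mathfrak{S}$ is closed under $\parallel,\gamma$ and $\{i,o\}\in\Gamma(s_1\parallel s_2)\iff\{i,o\}\in\Gamma(s_j)$ for $i,o\in\lambda(s_j)$, then $(\mathfrak{S},\lambda,\parallel,\Gamma,\gamma)$ is a functional $\Lambda$-system algebra over $\mathcal{X}$. It has unique fixed points if $|\mathrm{Fix}(s,i,o,\mathbf{x})|=1$ for all $s$, $\{i,o\}\in\Gamma(s)$, $\mathbf{x}$. $\Gamma$ permits reordering if for all $s$, $\{i,o\}\in\Gamma(s)$, $\{i',o'\}\in\Gamma(\gamma_{i,o}(s))$ we have $\{i',o'\}\in\Gamma(s)$ and $\{i,o\}\in\Gamma(\gamma_{i',o'}(s))$. The algebra is composition-order invariant if (i) $\Gamma$ permits reordering and $\gamma_{i',o'}(\gamma_{i,o}(s))=\gamma_{i,o}(\gamma_{i',o'}(s))$ in the situation just described, (ii) $\parallel$ is associative and commutative, and (iii) $\gamma_{i,o}(s_1)\parallel s_2=\gamma_{i,o}(s_1\parallel s_2)$ whenever $\lambda(s_1)\cap\lambda(s_2)=\emptyset$ and $\{i,o\}\in\Gamma(s_1)$. *)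

theory Defs
  imports Main
begin

text \<open>An element of X^I is represented as a partial map with domain
  exactly I; the function is required to be extensional (returns the empty
  map outside X^I), so that HOL equality is equality of functions X^I \<rightarrow> X^O.\<close>

record ('l, 'x) sys =
  ins  :: "'l set"
  outs :: "'l set"
  fn   :: "('l \<rightharpoonup> 'x) \<Rightarrow> ('l \<rightharpoonup> 'x)"

definition valid_sys :: "('l, 'x) sys \<Rightarrow> bool" where
  "valid_sys s \<longleftrightarrow> finite (ins s) \<and> finite (outs s) \<and> ins s \<inter> outs s = {} \<and>
     (\<forall>x. dom x = ins s \<longrightarrow> dom (fn s x) = outs s) \<and>
     (\<forall>x. dom x \<noteq> ins s \<longrightarrow> fn s x = Map.empty)"

definition lab :: "('l, 'x) sys \<Rightarrow> 'l set" where
  "lab s = ins s \<union> outs s"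

definition Fix :: "('l, 'x) sys \<Rightarrow> 'l \<Rightarrow> 'l \<Rightarrow> ('l \<rightharpoonup> 'x) \<Rightarrow> 'x set" where
  "Fix s i ou x = {xi. fn s (x(i \<mapsto> xi)) ou = Some xi}"

definition par :: "('l, 'x) sys \<Rightarrow> ('l, 'x) sys \<Rightarrow> ('l, 'x) sys" where
  "par s1 s2 = \<lparr> ins = ins s1 \<union> ins s2, outs = outs s1 \<union> outs s2,
     fn = (\<lambda>x. if dom x = ins s1 \<union> ins s2
               then fn s1 (x |` ins s1) ++ fn s2 (x |` ins s2) else Map.empty) \<rparr>"

text \<open>phi s i ou x is the chosen fixed point \<open>\<phi>^s_{i,ou}(x)\<close>.\<close>
definition gam :: "(('l, 'x) sys \<Rightarrow> 'l \<Rightarrow> 'l \<Rightarrow> ('l \<rightharpoonup> 'x) \<Rightarrow> 'x)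
    \<Rightarrow> ('l, 'x) sys \<Rightarrow> 'l \<Rightarrow> 'l \<Rightarrow> ('l, 'x) sys" where
  "gam phi s i ou = \<lparr> ins = ins s - {i}, outs = outs s - {ou},
     fn = (\<lambda>x. if dom x = ins s - {i}
               then fn s (x(i \<mapsto> phi s i ou x)) |` (outs s - {ou}) else Map.empty) \<rparr>"

text \<open>The unordered pair {i,ou} with i an input and ou an output is represented
  as the ordered pair (i,ou).\<close>
definition functional_system_algebra ::
  "('l, 'x) sys set \<Rightarrow> (('l, 'x) sys \<Rightarrow> ('l \<times> 'l) set)
   \<Rightarrow> (('l, 'x) sys \<Rightarrow> 'l \<Rightarrow> 'l \<Rightarrow> ('l \<rightharpoonup> 'x) \<Rightarrow> 'x) \<Rightarrow> bool" where
  "functional_system_algebra S Gam phi \<longleftrightarrow>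
     (\<forall>s\<in>S. valid_sys s) \<and>
     (\<forall>s\<in>S. Gam s \<subseteq> ins s \<times> outs s) \<and>
     (\<forall>s\<in>S. \<forall>(i, ou)\<in>Gam s. \<forall>x. dom x = ins s - {i} \<longrightarrow> Fix s i ou x \<noteq> {}) \<and>
     (\<forall>s\<in>S. \<forall>(i, ou)\<in>Gam s. \<forall>x. dom x = ins s - {i} \<longrightarrow> phi s i ou x \<in> Fix s i ou x) \<and>
     (\<forall>s1\<in>S. \<forall>s2\<in>S. lab s1 \<inter> lab s2 = {} \<longrightarrow> par s1 s2 \<in> S) \<and>
     (\<forall>s\<in>S. \<forall>(i, ou)\<in>Gam s. gam phi s i ou \<in> S) \<and>
     (\<forall>s1\<in>S. \<forall>s2\<in>S. lab s1 \<inter> lab s2 = {} \<longrightarrow>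
        (\<forall>i ou. i \<in> lab s1 \<and> ou \<in> lab s1 \<longrightarrow> ((i, ou) \<in> Gam (par s1 s2) \<longleftrightarrow> (i, ou) \<in> Gam s1)) \<and>
        (\<forall>i ou. i \<in> lab s2 \<and> ou \<in> lab s2 \<longrightarrow> ((i, ou) \<in> Gam (par s1 s2) \<longleftrightarrow> (i, ou) \<in> Gam s2)))"

definition unique_fixed_points ::
  "('l, 'x) sys set \<Rightarrow> (('l, 'x) sys \<Rightarrow> ('l \<times> 'l) set) \<Rightarrow> bool" where
  "unique_fixed_points S Gam \<longleftrightarrow>
     (\<forall>s\<in>S. \<forall>(i, ou)\<in>Gam s. \<forall>x. dom x = ins s - {i} \<longrightarrow> card (Fix s i ou x) = 1)"

definition permits_reordering ::
  "('l, 'x) sys set \<Rightarrow> (('l, 'x) sys \<Rightarrow> ('l \<times> 'l) set)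
   \<Rightarrow> (('l, 'x) sys \<Rightarrow> 'l \<Rightarrow> 'l \<Rightarrow> ('l \<rightharpoonup> 'x) \<Rightarrow> 'x) \<Rightarrow> bool" where
  "permits_reordering S Gam phi \<longleftrightarrow>
     (\<forall>s\<in>S. \<forall>(i, ou)\<in>Gam s. \<forall>(i', ou')\<in>Gam (gam phi s i ou).
        (i', ou') \<in> Gam s \<and> (i, ou) \<in> Gam (gam phi s i' ou'))"

definition composition_order_invariant ::
  "('l, 'x) sys set \<Rightarrow> (('l, 'x) sys \<Rightarrow> ('l \<times> 'l) set)
   \<Rightarrow> (('l, 'x) sys \<Rightarrow> 'l \<Rightarrow> 'l \<Rightarrow> ('l \<rightharpoonup> 'x) \<Rightarrow> 'x) \<Rightarrow> bool" where
  "composition_order_invariant S Gam phi \<longleftrightarrow>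
     permits_reordering S Gam phi \<and>
     (\<forall>s\<in>S. \<forall>(i, ou)\<in>Gam s. \<forall>(i', ou')\<in>Gam (gam phi s i ou).
        gam phi (gam phi s i ou) i' ou' = gam phi (gam phi s i' ou') i ou) \<and>
     (\<forall>s1\<in>S. \<forall>s2\<in>S. \<forall>s3\<in>S.
        lab s1 \<inter> lab s2 = {} \<and> lab s1 \<inter> lab s3 = {} \<and> lab s2 \<inter> lab s3 = {} \<longrightarrow>
        par (par s1 s2) s3 = par s1 (par s2 s3)) \<and>
     (\<forall>s1\<in>S. \<forall>s2\<in>S. lab s1 \<inter> lab s2 = {} \<longrightarrow> par s1 s2 = par s2 s1) \<and>
     (\<forall>s1\<in>S. \<forall>s2\<in>S. \<forall>(i, ou)\<in>Gam s1. lab s1 \<inter> lab s2 = {} \<longrightarrow>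
        par (gam phi s1 i ou) s2 = gam phi (par s1 s2) i ou)"

end

theory Submission
  imports Defs
begin

lemma par_simps[simp]: "ins (par a b) = ins a \<union> ins b" "outs (par a b) = outs a \<union> outs b"
  "fn (par a b) x = (if dom x = ins a \<union> ins b then fn a (x |` ins a) ++ fn b (x |` ins b) else Map.empty)"
  by (simp_all add: par_def)

lemma gam_simps[simp]: "ins (gam phi s i ou) = ins s - {i}" "outs (gam phi s i ou) = outs s - {ou}"
  "fn (gam phi s i ou) x = (if dom x = ins s - {i}
               then fn s (x(i \<mapsto> phi s i ou x)) |` (outs s - {ou}) else Map.empty)"
  by (simp_all add: gam_def)

lemma sys_eqI: "ins a = ins b \<Longrightarrow> outs a = outs b \<Longrightarrow> (\<And>x. fn a x = fn b x) \<Longrightarrow> a = (b::('l,'x) sys)"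
  by (cases a, cases b) auto

lemma card1_eq: "card A = 1 \<Longrightarrow> a \<in> A \<Longrightarrow> b \<in> A \<Longrightarrow> a = b"
  by (metis card_1_singletonE singletonD)

lemma par_assoc_gen: "par (par s1 s2) s3 = par s1 (par s2 s3)"
proof (rule sys_eqI)
  fix x
  show "fn (par (par s1 s2) s3) x = fn (par s1 (par s2 s3)) x"
  proof (cases "dom x = ins s1 \<union> ins s2 \<union> ins s3")
    case True
    have d1: "dom (x |` (ins s1 \<union> ins s2)) = ins s1 \<union> ins s2" using True by auto
    have d2: "dom (x |` (ins s2 \<union> ins s3)) = ins s2 \<union> ins s3" using True by auto
    show ?thesis using True d1 d2 by (simp add: Un_assoc Int_absorb1 Int_commute)
  qed (auto simp: Un_assoc)
qed (auto)


lemma par_comm_gen: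
  assumes "valid_sys s1" "valid_sys s2" "lab s1 \<inter> lab s2 = {}"
  shows "par s1 s2 = par s2 s1"
proof (rule sys_eqI)
  fix x
  show "fn (par s1 s2) x = fn (par s2 s1) x"
  proof (cases "dom x = ins s1 \<union> ins s2")
    case True
    have "dom (fn s1 (x |` ins s1)) = outs s1" using assms(1) True unfolding valid_sys_def by auto
    moreover have "dom (fn s2 (x |` ins s2)) = outs s2" using assms(2) True unfolding valid_sys_def by auto
    ultimately have "fn s1 (x |` ins s1) ++ fn s2 (x |` ins s2) = fn s2 (x |` ins s2) ++ fn s1 (x |` ins s1)"
      using assms(3) unfolding lab_def by (intro map_add_comm) auto
    thus ?thesis using True by (auto simp: Un_commute)
  qed (auto simp: Un_commute)
qed (auto simp: Un_commute)

lemma gam_comm_gen: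
  fixes s :: "('l,'x) sys" and phi i ou i' ou'
  defines "g \<equiv> gam phi s i ou" and "g' \<equiv> gam phi s i' ou'"
  assumes ii: "i \<noteq> i'" and iin: "i \<in> ins s" "i' \<in> ins s" and oo: "ou \<noteq> ou'" and oin: "ou \<in> outs s" "ou' \<in> outs s"
    and H1: "\<And>y. dom y = ins s - {i} \<Longrightarrow> phi s i ou y \<in> Fix s i ou y \<and> card (Fix s i ou y) = 1"
    and H2: "\<And>y. dom y = ins s - {i'} \<Longrightarrow> phi s i' ou' y \<in> Fix s i' ou' y \<and> card (Fix s i' ou' y) = 1"
    and H3: "\<And>y. dom y = ins s - {i} - {i'} \<Longrightarrow> phi g i' ou' y \<in> Fix g i' ou' y \<and> card (Fix g i' ou' y) = 1"
    and H4: "\<And>y. dom y = ins s - {i'} - {i} \<Longrightarrow> phi g' i ou y \<in> Fix g' i ou y \<and> card (Fix g' i ou y) = 1"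
  shows "gam phi g i' ou' = gam phi g' i ou"
proof (rule sys_eqI)
  have e1: "ins s - {i} - {i'} = ins s - {i'} - {i}" by auto
  have e2: "outs s - {ou} - {ou'} = outs s - {ou'} - {ou}" by auto
  show "ins (gam phi g i' ou') = ins (gam phi g' i ou)" using e1 by (simp add: g_def g'_def)
  show "outs (gam phi g i' ou') = outs (gam phi g' i ou)" using e2 by (simp add: g_def g'_def)
  fix x
  show "fn (gam phi g i' ou') x = fn (gam phi g' i ou) x"
  proof (cases "dom x = ins s - {i} - {i'}")
    case False thus ?thesis using e1 by (simp add: g_def g'_def)
  next
    case True
    hence T': "dom x = ins s - {i'} - {i}" using e1 by simp
    define a' where "a' = phi g i' ou' x"
    define a where "a = phi s i ou (x(i' \<mapsto> a'))"
    define b where "b = phi g' i ou x"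
    define b' where "b' = phi s i' ou' (x(i \<mapsto> b))"
    have dxa: "dom (x(i' \<mapsto> c)) = ins s - {i}" for c using True ii iin by auto
    have dxb: "dom (x(i \<mapsto> c)) = ins s - {i'}" for c using True ii iin by auto
    have fa': "fn s (x(i' \<mapsto> a', i \<mapsto> a)) ou' = Some a'"
      using conjunct1[OF H3[OF True]] oo dxa[of a'] unfolding Fix_def a'_def[symmetric] a_def
      by (simp add: g_def restrict_map_def split: if_splits)
    have fa: "fn s (x(i' \<mapsto> a', i \<mapsto> a)) ou = Some a"
      using conjunct1[OF H1[OF dxa[of a']]] unfolding Fix_def a_def by simp
    have fb: "fn s (x(i \<mapsto> b, i' \<mapsto> b')) ou = Some b"
      using conjunct1[OF H4[OF T']] oo dxb[of b] unfolding Fix_def b_def[symmetric] b'_def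
      by (simp add: g'_def restrict_map_def split: if_splits)
    have fb': "fn s (x(i \<mapsto> b, i' \<mapsto> b')) ou' = Some b'"
      using conjunct1[OF H2[OF dxb[of b]]] unfolding Fix_def b'_def by simp
    have sw: "x(i \<mapsto> b, i' \<mapsto> b') = x(i' \<mapsto> b', i \<mapsto> b)" using ii by (simp add: fun_upd_twist)
    have pb: "phi s i ou (x(i' \<mapsto> b')) = b"
      using H1[OF dxa[of b']] fb sw unfolding Fix_def by (metis (mono_tags, lifting) card1_eq mem_Collect_eq)
    have "b' \<in> Fix g i' ou' x"
      unfolding Fix_def using dxa[of b'] pb fb' sw oo oin by (simp add: g_def restrict_map_def split: if_splits)
    hence ab': "a' = b'" using H3[OF True] unfolding a'_def using card1_eq by metis
    have ab: "a = b" unfolding a_def ab' using pb .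
    have L: "fn (gam phi g i' ou') x = fn s (x(i' \<mapsto> a', i \<mapsto> a)) |` (outs s - {ou} - {ou'})"
      using True dxa[of a'] unfolding a'_def[symmetric] a_def[symmetric]
      by (simp add: g_def Int_absorb1 Diff_subset Int_commute) (simp add: a_def a'_def g_def Int_absorb2 Diff_subset)
    have R: "fn (gam phi g' i ou) x = fn s (x(i \<mapsto> b, i' \<mapsto> b')) |` (outs s - {ou'} - {ou})"
      using T' dxb[of b] unfolding b_def[symmetric] b'_def[symmetric]
      by (simp add: g'_def Int_absorb1 Diff_subset Int_commute) (simp add: b_def b'_def g'_def Int_absorb2 Diff_subset)
    show ?thesis unfolding L R ab ab' sw e2 ..
  qed
qed


lemma par_gam_gen:
  fixes s1 :: "('l,'x) sys" and phi i ou
  assumes v1: "valid_sys s1" and v2: "valid_sys s2" and dj: "lab s1 \<inter> lab s2 = {}"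
    and iin: "i \<in> ins s1" and oin: "ou \<in> outs s1"
    and H1: "\<And>y. dom y = ins s1 - {i} \<Longrightarrow> phi s1 i ou y \<in> Fix s1 i ou y \<and> card (Fix s1 i ou y) = 1"
    and H2: "\<And>y. dom y = ins s1 \<union> ins s2 - {i} \<Longrightarrow> phi (par s1 s2) i ou y \<in> Fix (par s1 s2) i ou y"
  shows "par (gam phi s1 i ou) s2 = gam phi (par s1 s2) i ou"
proof (rule sys_eqI)
  have i2: "i \<notin> ins s2" "i \<notin> outs s2" "ou \<notin> ins s2" "ou \<notin> outs s2"
    using dj iin oin unfolding lab_def by auto
  have e1: "ins s1 - {i} \<union> ins s2 = ins s1 \<union> ins s2 - {i}" using i2 by auto
  show "ins (par (gam phi s1 i ou) s2) = ins (gam phi (par s1 s2) i ou)" using e1 by simp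
  show "outs (par (gam phi s1 i ou) s2) = outs (gam phi (par s1 s2) i ou)" using i2 by auto
  fix x
  show "fn (par (gam phi s1 i ou) s2) x = fn (gam phi (par s1 s2) i ou) x"
  proof (cases "dom x = ins s1 \<union> ins s2 - {i}")
    case False thus ?thesis using e1 by simp
  next
    case True
    define q where "q = phi (par s1 s2) i ou x"
    define y where "y = x |` (ins s1 - {i})"
    have dy: "dom y = ins s1 - {i}" using True unfolding y_def by auto
    have dx2: "dom (x |` ins s2) = ins s2" using True i2 by auto
    have r1: "x(i \<mapsto> q) |` ins s1 = y(i \<mapsto> q)" unfolding y_def using iin
      by (auto simp: restrict_map_def fun_eq_iff)
    have r2: "x(i \<mapsto> q) |` ins s2 = x |` ins s2" using i2 by (auto simp: restrict_map_def fun_eq_iff)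
    have dxq: "dom (x(i \<mapsto> q)) = ins s1 \<union> ins s2" using True iin by auto
    have o2: "dom (fn s2 (x |` ins s2)) = outs s2" using v2 dx2 unfolding valid_sys_def by auto
    have o1: "dom (fn s1 (y(i \<mapsto> c))) = outs s1" for c proof -
      have "dom (y(i \<mapsto> c)) = ins s1" using dy iin by auto
      thus ?thesis using v1 unfolding valid_sys_def by blast
    qed
    have "fn (par s1 s2) (x(i \<mapsto> q)) ou = Some q" using H2[OF True] unfolding Fix_def q_def by simp
    hence "(fn s1 (y(i \<mapsto> q)) ++ fn s2 (x |` ins s2)) ou = Some q" using dxq r1 r2 by simp
    hence "fn s1 (y(i \<mapsto> q)) ou = Some q" proof -
      have "fn s2 (x |` ins s2) ou = None" using o2 i2 by blast
      thus ?thesis using \<open>(fn s1 (y(i \<mapsto> q)) ++ fn s2 (x |` ins s2)) ou = Some q\<close> by (simp add: map_add_def)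
    qed
    hence "q \<in> Fix s1 i ou y" unfolding Fix_def by simp
    hence pq: "phi s1 i ou y = q" using H1[OF dy] card1_eq by metis
    have L: "fn (par (gam phi s1 i ou) s2) x = (fn s1 (y(i \<mapsto> q)) |` (outs s1 - {ou})) ++ fn s2 (x |` ins s2)"
      using True e1 dy pq unfolding y_def by simp
    have R: "fn (gam phi (par s1 s2) i ou) x = (fn s1 (y(i \<mapsto> q)) ++ fn s2 (x |` ins s2)) |` (outs s1 \<union> outs s2 - {ou})"
    proof -
      have "fn (gam phi (par s1 s2) i ou) x = fn (par s1 s2) (x(i \<mapsto> q)) |` (outs s1 \<union> outs s2 - {ou})"
        using True by (simp del: par_simps(3) add: q_def)
      also have "fn (par s1 s2) (x(i \<mapsto> q)) = fn s1 (y(i \<mapsto> q)) ++ fn s2 (x |` ins s2)"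
        by (simp only: par_simps(3) dxq if_True r1 r2 simp_thms)
      finally show ?thesis .
    qed
    show ?thesis unfolding L R using o1[of q] o2 i2
      by (auto simp: fun_eq_iff map_add_def restrict_map_def split: option.splits)
  qed
qed


theorem theorem4p7:
  fixes S :: "('l, 'x) sys set"
    and Gam :: "('l, 'x) sys \<Rightarrow> ('l \<times> 'l) set"
    and phi :: "('l, 'x) sys \<Rightarrow> 'l \<Rightarrow> 'l \<Rightarrow> ('l \<rightharpoonup> 'x) \<Rightarrow> 'x"
  assumes "functional_system_algebra S Gam phi"
    and "unique_fixed_points S Gam"
    and "permits_reordering S Gam phi"
  shows "composition_order_invariant S Gam phi"
proof -
  obtain A1: "\<forall>s\<in>S. valid_sys s" and A2: "\<forall>s\<in>S. Gam s \<subseteq> ins s \<times> outs s"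
    and A4: "\<forall>s\<in>S. \<forall>(i, ou)\<in>Gam s. \<forall>x. dom x = ins s - {i} \<longrightarrow> phi s i ou x \<in> Fix s i ou x"
    and A5: "\<forall>s1\<in>S. \<forall>s2\<in>S. lab s1 \<inter> lab s2 = {} \<longrightarrow> par s1 s2 \<in> S"
    and A6: "\<forall>s\<in>S. \<forall>(i, ou)\<in>Gam s. gam phi s i ou \<in> S"
    and A7: "\<forall>s1\<in>S. \<forall>s2\<in>S. lab s1 \<inter> lab s2 = {} \<longrightarrow>
        (\<forall>i ou. i \<in> lab s1 \<and> ou \<in> lab s1 \<longrightarrow> ((i, ou) \<in> Gam (par s1 s2) \<longleftrightarrow> (i, ou) \<in> Gam s1)) \<and>
        (\<forall>i ou. i \<in> lab s2 \<and> ou \<in> lab s2 \<longrightarrow> ((i, ou) \<in> Gam (par s1 s2) \<longleftrightarrow> (i, ou) \<in> Gam s2))"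
    using assms(1) unfolding functional_system_algebra_def by (elim conjE) 
  have V: "\<And>s. s \<in> S \<Longrightarrow> valid_sys s" using A1 by blast
  have G: "\<And>s i ou. s \<in> S \<Longrightarrow> (i, ou) \<in> Gam s \<Longrightarrow> i \<in> ins s \<and> ou \<in> outs s" using A2 by blast
  have P: "\<And>s i ou y. s \<in> S \<Longrightarrow> (i, ou) \<in> Gam s \<Longrightarrow> dom y = ins s - {i} \<Longrightarrow> phi s i ou y \<in> Fix s i ou y"
  proof -
    fix s i ou and y :: "'l \<rightharpoonup> 'x" assume "s \<in> S" "(i, ou) \<in> Gam s" "dom y = ins s - {i}"
    note h = bspec[OF bspec[OF A4 this(1)] this(2)]
    thus "phi s i ou y \<in> Fix s i ou y" using \<open>dom y = ins s - {i}\<close> by simp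
  qed
  have U: "\<And>s i ou (y::'l \<rightharpoonup> 'x). s \<in> S \<Longrightarrow> (i, ou) \<in> Gam s \<Longrightarrow> dom y = ins s - {i} \<Longrightarrow> card (Fix s i ou y) = 1"
  proof -
    fix s i ou and y :: "'l \<rightharpoonup> 'x" assume "s \<in> S" "(i, ou) \<in> Gam s" "dom y = ins s - {i}"
    note h = bspec[OF bspec[OF assms(2)[unfolded unique_fixed_points_def] this(1)] this(2)]
    thus "card (Fix s i ou y) = 1" using \<open>dom y = ins s - {i}\<close> by simp
  qed
  have PS: "\<And>s1 s2. s1 \<in> S \<Longrightarrow> s2 \<in> S \<Longrightarrow> lab s1 \<inter> lab s2 = {} \<Longrightarrow> par s1 s2 \<in> S" using A5 by blast
  have GS: "\<And>s i ou. s \<in> S \<Longrightarrow> (i, ou) \<in> Gam s \<Longrightarrow> gam phi s i ou \<in> S" using A6 by blast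
  have PG: "\<And>s1 s2 i ou. s1 \<in> S \<Longrightarrow> s2 \<in> S \<Longrightarrow> lab s1 \<inter> lab s2 = {} \<Longrightarrow> i \<in> lab s1 \<Longrightarrow> ou \<in> lab s1
     \<Longrightarrow> (i, ou) \<in> Gam (par s1 s2) \<longleftrightarrow> (i, ou) \<in> Gam s1" using A7 by blast
  have R: "\<And>s i ou i' ou'. s \<in> S \<Longrightarrow> (i, ou) \<in> Gam s \<Longrightarrow> (i', ou') \<in> Gam (gam phi s i ou) \<Longrightarrow>
     (i', ou') \<in> Gam s \<and> (i, ou) \<in> Gam (gam phi s i' ou')"
  proof -
    fix s i ou i' ou' assume hh: "s \<in> S" "(i, ou) \<in> Gam s" "(i', ou') \<in> Gam (gam phi s i ou)"
    thus "(i', ou') \<in> Gam s \<and> (i, ou) \<in> Gam (gam phi s i' ou')"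
      using bspec[OF bspec[OF assms(3)[unfolded permits_reordering_def] hh(1)] hh(2)] hh(3) by auto
  qed
  have c2: "gam phi (gam phi s i ou) i' ou' = gam phi (gam phi s i' ou') i ou"
    if s: "s \<in> S" and g1: "(i, ou) \<in> Gam s" and g2: "(i', ou') \<in> Gam (gam phi s i ou)" for s i ou i' ou'
  proof -
    have gs: "gam phi s i ou \<in> S" using GS s g1 .
    obtain g3: "(i', ou') \<in> Gam s" and g4: "(i, ou) \<in> Gam (gam phi s i' ou')" using R[OF s g1 g2] by blast
    have gs': "gam phi s i' ou' \<in> S" using GS s g3 .
    have m2: "i' \<in> ins s - {i}" "ou' \<in> outs s - {ou}" using G[OF gs g2] by auto
    show ?thesis
    proof (rule gam_comm_gen)
      show "i \<noteq> i'" "ou \<noteq> ou'" using m2 by auto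
      show "i \<in> ins s" "ou \<in> outs s" using G[OF s g1] by auto
      show "i' \<in> ins s" "ou' \<in> outs s" using m2 by auto
      show "\<And>y. dom y = ins s - {i} \<Longrightarrow> phi s i ou y \<in> Fix s i ou y \<and> card (Fix s i ou y) = 1"
        using P[OF s g1] U[OF s g1] by blast
      show "\<And>y. dom y = ins s - {i'} \<Longrightarrow> phi s i' ou' y \<in> Fix s i' ou' y \<and> card (Fix s i' ou' y) = 1"
        using P[OF s g3] U[OF s g3] by blast
      show "\<And>y. dom y = ins s - {i} - {i'} \<Longrightarrow> phi (gam phi s i ou) i' ou' y \<in> Fix (gam phi s i ou) i' ou' y \<and> card (Fix (gam phi s i ou) i' ou' y) = 1"
        using P[OF gs g2] U[OF gs g2] by simp
      show "\<And>y. dom y = ins s - {i'} - {i} \<Longrightarrow> phi (gam phi s i' ou') i ou y \<in> Fix (gam phi s i' ou') i ou y \<and> card (Fix (gam phi s i' ou') i ou y) = 1"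
        using P[OF gs' g4] U[OF gs' g4] by simp
    qed
  qed
  have c5: "par (gam phi s1 i ou) s2 = gam phi (par s1 s2) i ou"
    if s1: "s1 \<in> S" and s2: "s2 \<in> S" and g: "(i, ou) \<in> Gam s1" and dj: "lab s1 \<inter> lab s2 = {}" for s1 s2 i ou
  proof -
    have io: "i \<in> ins s1" "ou \<in> outs s1" using G[OF s1 g] by auto
    have ps: "par s1 s2 \<in> S" using PS s1 s2 dj .
    have gp: "(i, ou) \<in> Gam (par s1 s2)" using PG[OF s1 s2 dj] io g unfolding lab_def by blast
    show ?thesis
    proof (rule par_gam_gen)
      show "valid_sys s1" "valid_sys s2" using V s1 s2 by auto
      show "lab s1 \<inter> lab s2 = {}" "i \<in> ins s1" "ou \<in> outs s1" using dj io by auto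
      show "\<And>y. dom y = ins s1 - {i} \<Longrightarrow> phi s1 i ou y \<in> Fix s1 i ou y \<and> card (Fix s1 i ou y) = 1"
        using P[OF s1 g] U[OF s1 g] by blast
      show "\<And>y. dom y = ins s1 \<union> ins s2 - {i} \<Longrightarrow> phi (par s1 s2) i ou y \<in> Fix (par s1 s2) i ou y"
        using P[OF ps gp] by simp
    qed
  qed
  have X2: "\<forall>s\<in>S. \<forall>(i, ou)\<in>Gam s. \<forall>(i', ou')\<in>Gam (gam phi s i ou).
        gam phi (gam phi s i ou) i' ou' = gam phi (gam phi s i' ou') i ou"
    using c2 by fastforce
  have X3: "\<forall>s1\<in>S. \<forall>s2\<in>S. \<forall>s3\<in>S.
        lab s1 \<inter> lab s2 = {} \<and> lab s1 \<inter> lab s3 = {} \<and> lab s2 \<inter> lab s3 = {} \<longrightarrow>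
        par (par s1 s2) s3 = par s1 (par s2 s3)" using par_assoc_gen by blast
  have X4: "\<forall>s1\<in>S. \<forall>s2\<in>S. lab s1 \<inter> lab s2 = {} \<longrightarrow> par s1 s2 = par s2 s1"
    using par_comm_gen V by blast
  have X5: "\<forall>s1\<in>S. \<forall>s2\<in>S. \<forall>(i, ou)\<in>Gam s1. lab s1 \<inter> lab s2 = {} \<longrightarrow>
        par (gam phi s1 i ou) s2 = gam phi (par s1 s2) i ou"
    using c5 by fastforce
  show ?thesis unfolding composition_order_invariant_def using assms(3) X2 X3 X4 X5 by (intro conjI)
qed

end
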